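(* Let $s\ge 2$ and $R\ge 1$ be integers. The following are equivalent: (i) $\mathrm{Perf}(s,R,R)\neq\emptyset$; (ii) $\mathrm{Perf}(s,r,R)\neq\emptyset$ for some integer $r>R$; (iii) $\mathrm{Perf}(s,r,R)\neq\emptyset$ for every integer $r>R$.
   Context: $q$ is a prime power, $\mathbb F_q^{s\times n}$ the set of $s\times n$ matrices over $\mathbb F_q$ with rows in $\mathbb F_q^{1\times n}$. For a row $y=(y_1,\dots,y_n)$, the NRT weight is $w(y)=\max\{j: y_j\neq 0\}$ if $y\ne0$ and $w(0)=0$; for a matrix, $w(x)=\sum_i w(x_i)$. The NRT metric is $d(x,y)=w(x-y)$; $B(c,R)=\{x: d(x,c)\le R\}$. A code $C\subseteq\mathbb F_q^{s\times n}$ is $R$-perfect if the balls $B(c,R)$, $c\in C$, are pairwise disjoint and cover $\mathbb F_q^{s\times n}$; non-trivial means $|C|>1$ and $C\ne\mathbb F_q^{s\times n}$. $\mathrm{Perf}(s,n,R)$ denotes the set of non-trivial $R$-perfect codes in $\mathbb F_q^{s\times n}$ (for the fixed $q$). *)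

theory Defs
  imports Main
begin

text \<open>The ambient field F_q is modelled by a type variable of sort {finite, field}:
  these are exactly the finite fields, i.e. F_q for q a prime power.
  An s x n matrix is a function nat => nat => 'a vanishing outside rows 0..s-1 and
  columns 0..n-1 (column j here is column j+1 of the paper).\<close>

type_synonym 'a mat = "nat \<Rightarrow> nat \<Rightarrow> 'a"

definition mat_space :: "nat \<Rightarrow> nat \<Rightarrow> ('a::{finite,field}) mat set" where
  "mat_space s n = {x. \<forall>i j. (s \<le> i \<or> n \<le> j) \<longrightarrow> x i j = 0}"

definition row_wt :: "nat \<Rightarrow> (nat \<Rightarrow> 'a::{finite,field}) \<Rightarrow> nat" where
  "row_wt n y = (if (\<forall>j<n. y j = 0) then 0 else Suc (Max {j. j < n \<and> y j \<noteq> 0}))"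

definition nrt_wt :: "nat \<Rightarrow> nat \<Rightarrow> ('a::{finite,field}) mat \<Rightarrow> nat" where
  "nrt_wt s n x = (\<Sum>i<s. row_wt n (x i))"

definition nrt_dist :: "nat \<Rightarrow> nat \<Rightarrow> ('a::{finite,field}) mat \<Rightarrow> 'a mat \<Rightarrow> nat" where
  "nrt_dist s n x y = nrt_wt s n (\<lambda>i j. x i j - y i j)"

definition nrt_ball :: "nat \<Rightarrow> nat \<Rightarrow> ('a::{finite,field}) mat \<Rightarrow> nat \<Rightarrow> 'a mat set" where
  "nrt_ball s n c R = {x \<in> mat_space s n. nrt_dist s n x c \<le> R}"

definition perfect_code :: "nat \<Rightarrow> nat \<Rightarrow> nat \<Rightarrow> ('a::{finite,field}) mat set \<Rightarrow> bool" where
  "perfect_code s n R C \<longleftrightarrow> C \<subseteq> mat_space s n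
     \<and> (\<forall>c\<in>C. \<forall>c'\<in>C. c \<noteq> c' \<longrightarrow> nrt_ball s n c R \<inter> nrt_ball s n c' R = {})
     \<and> (\<Union>c\<in>C. nrt_ball s n c R) = mat_space s n"

definition Perf :: "nat \<Rightarrow> nat \<Rightarrow> nat \<Rightarrow> ('a::{finite,field}) mat set set" where
  "Perf s n R = {C. perfect_code s n R C \<and> 1 < card C \<and> C \<noteq> mat_space s n}"

end

theory Submission
  imports Defs
begin

definition trunc :: "nat \<Rightarrow> ('a::{finite,field}) mat \<Rightarrow> 'a mat" where
  "trunc R x = (\<lambda>i j. if j < R then x i j else 0)"

lemma row_wt_ge: "j < n \<Longrightarrow> y j \<noteq> 0 \<Longrightarrow> Suc j \<le> row_wt n y"
proof -
  assume a: "j < n" "y j \<noteq> 0"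
  have f: "finite {j. j < n \<and> y j \<noteq> 0}" by simp
  have "j \<le> Max {j. j < n \<and> y j \<noteq> 0}" using a f by (intro Max_ge) auto
  then show ?thesis using a unfolding row_wt_def by auto
qed

lemma row_wt_le_iff: "row_wt n y \<le> k \<longleftrightarrow> (\<forall>j<n. k \<le> j \<longrightarrow> y j = 0)"
proof
  assume a: "row_wt n y \<le> k"
  show "\<forall>j<n. k \<le> j \<longrightarrow> y j = 0"
  proof (intro allI impI)
    fix j assume j: "j < n" "k \<le> j"
    show "y j = 0"
    proof (rule ccontr)
      assume "y j \<noteq> 0"
      then have "Suc j \<le> row_wt n y" by (rule row_wt_ge[OF j(1)])
      then show False using a j by linarith
    qed
  qed
next
  assume H: "\<forall>j<n. k \<le> j \<longrightarrow> y j = 0"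
  show "row_wt n y \<le> k"
  proof (cases "\<forall>j<n. y j = 0")
    case True thus ?thesis by (simp add: row_wt_def)
  next
    case False
    let ?S = "{j. j < n \<and> y j \<noteq> 0}"
    have f: "finite ?S" by simp
    have ne: "?S \<noteq> {}" using False by auto
    have "Max ?S \<in> ?S" using f ne by (rule Max_in)
    then have m: "Max ?S < n" "y (Max ?S) \<noteq> 0" by auto
    have "Max ?S < k"
    proof (rule ccontr)
      assume "\<not> Max ?S < k"
      then have "k \<le> Max ?S" by simp
      then show False using H m by auto
    qed
    moreover have "row_wt n y = Suc (Max ?S)" using False by (simp add: row_wt_def)
    ultimately show ?thesis by simp
  qed
qed

lemma row_wt_cong: "(\<forall>j<n. y j = y' j) \<Longrightarrow> row_wt n y = row_wt n y'"
proof -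
  assume a: "\<forall>j<n. y j = y' j"
  have "{j. j < n \<and> y j \<noteq> 0} = {j. j < n \<and> y' j \<noteq> 0}" using a by auto
  then show ?thesis using a unfolding row_wt_def by simp
qed

lemma row_wt_restrict:
  "R \<le> n \<Longrightarrow> (\<forall>j. R \<le> j \<and> j < n \<longrightarrow> y j = 0) \<Longrightarrow> row_wt n y = row_wt R y"
proof -
  assume a: "R \<le> n" "\<forall>j. R \<le> j \<and> j < n \<longrightarrow> y j = 0"
  have "{j. j < n \<and> y j \<noteq> 0} = {j. j < R \<and> y j \<noteq> 0}" using a by (auto simp: not_less)
  moreover have "(\<forall>j<n. y j = 0) \<longleftrightarrow> (\<forall>j<R. y j = 0)"
  proof
    assume "\<forall>j<n. y j = 0" then show "\<forall>j<R. y j = 0" using a(1) by simp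
  next
    assume h: "\<forall>j<R. y j = 0"
    show "\<forall>j<n. y j = 0"
    proof (intro allI impI)
      fix j assume "j < n"
      then show "y j = 0" using h a(2) by (cases "j < R") simp_all
    qed
  qed
  ultimately show ?thesis unfolding row_wt_def by simp
qed

lemma dist_le_agree:
  assumes "nrt_dist s r x y \<le> R" "i < s" "R \<le> j" "j < r"
  shows "x i j = y i j"
proof -
  have "row_wt r (\<lambda>j. x i j - y i j) \<le> nrt_dist s r x y"
    unfolding nrt_dist_def nrt_wt_def using assms(2)
    by (intro member_le_sum) auto
  then have "row_wt r (\<lambda>j. x i j - y i j) \<le> R" using assms(1) by linarith
  then show ?thesis using assms(3,4) unfolding row_wt_le_iff by auto
qed

lemma dist_restrict:
  "R \<le> r \<Longrightarrow> (\<forall>i<s. \<forall>j. R \<le> j \<and> j < r \<longrightarrow> x i j = y i j)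
   \<Longrightarrow> nrt_dist s r x y = nrt_dist s R x y"
  unfolding nrt_dist_def nrt_wt_def
  by (intro sum.cong refl row_wt_restrict) auto

lemma dist_cong:
  "(\<forall>i<s. \<forall>j<R. x i j - y i j = x' i j - y' i j) \<Longrightarrow> nrt_dist s R x y = nrt_dist s R x' y'"
  unfolding nrt_dist_def nrt_wt_def
  by (intro sum.cong refl row_wt_cong) auto

lemma finite_mat_space: "finite (mat_space s n :: ('a::{finite,field}) mat set)"
proof -
  let ?F = "{f :: nat \<times> nat \<Rightarrow> 'a. \<forall>p. (p \<in> {..<s} \<times> {..<n} \<longrightarrow> f p \<in> UNIV) \<and> (p \<notin> {..<s} \<times> {..<n} \<longrightarrow> f p = 0)}"
  have "finite ?F" by (intro finite_set_of_finite_funs) auto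
  moreover have "mat_space s n \<subseteq> curry ` ?F"
  proof
    fix x :: "'a mat" assume "x \<in> mat_space s n"
    then have "case_prod x \<in> ?F" unfolding mat_space_def by (auto simp: not_less)
    moreover have "x = curry (case_prod x)" by simp
    ultimately show "x \<in> curry ` ?F" by blast
  qed
  ultimately show ?thesis by (meson finite_imageI finite_subset)
qed

lemma dist_self: "nrt_dist s n x x = 0"
  unfolding nrt_dist_def nrt_wt_def row_wt_def by simp

lemma mat_spaceI: "(\<And>i j. s \<le> i \<or> n \<le> j \<Longrightarrow> x i j = 0) \<Longrightarrow> x \<in> mat_space s n"
  unfolding mat_space_def by blast

lemma mat_spaceD: "x \<in> mat_space s n \<Longrightarrow> s \<le> i \<or> n \<le> j \<Longrightarrow> x i j = 0"
  unfolding mat_space_def by blast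

lemma mat_space_mono: "R \<le> r \<Longrightarrow> x \<in> mat_space s R \<Longrightarrow> x \<in> mat_space s r"
  by (rule mat_spaceI, erule mat_spaceD) linarith

lemma trunc_ms: "x \<in> mat_space s r \<Longrightarrow> trunc R x \<in> mat_space s R"
proof (rule mat_spaceI)
  fix i j assume x: "x \<in> mat_space s r" and h: "s \<le> i \<or> R \<le> j"
  show "trunc R x i j = 0"
  proof (cases "j < R")
    case True then have "s \<le> i" using h by linarith
    then show ?thesis using mat_spaceD[OF x, of i j] by (simp add: trunc_def)
  qed (simp add: trunc_def)
qed

lemma trunc_id: "c \<in> mat_space s R \<Longrightarrow> trunc R c = c"
proof (intro ext)
  fix i j assume c: "c \<in> mat_space s R"
  show "trunc R c i j = c i j"
  proof (cases "j < R")
    case False then show ?thesis using mat_spaceD[OF c, of i j] by (simp add: trunc_def)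
  qed (simp add: trunc_def)
qed

lemma L1:
  fixes C :: "('a::{finite,field}) mat set"
  assumes C: "C \<in> Perf s R R" and Rr: "R \<le> r"
  shows "(Perf s r R :: 'a mat set set) \<noteq> {}"
proof -
  have pc: "perfect_code s R R C" and cardC: "1 < card C" and ne: "C \<noteq> mat_space s R"
    using C unfolding Perf_def by auto
  have Csub: "C \<subseteq> mat_space s R" and disj: "\<forall>c\<in>C. \<forall>c'\<in>C. c \<noteq> c' \<longrightarrow> nrt_ball s R c R \<inter> nrt_ball s R c' R = {}"
    and cov: "(\<Union>c\<in>C. nrt_ball s R c R) = mat_space s R"
    using pc unfolding perfect_code_def by auto
  have sub: "mat_space s R \<subseteq> (mat_space s r :: 'a mat set)" using Rr mat_space_mono by blast
  have tr_ms: "trunc R x \<in> mat_space s R" if "x \<in> mat_space s r" for x :: "'a mat"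
    using that by (rule trunc_ms)
  have tr_id: "trunc R c = c" if "c \<in> mat_space s R" for c :: "'a mat"
    using that by (rule trunc_id)
  have dtr: "nrt_dist s R x y = nrt_dist s R (trunc R x) (trunc R y)" for x y :: "'a mat"
    by (intro dist_cong) (auto simp: trunc_def)
  define C' where "C' = {x \<in> mat_space s r. trunc R x \<in> C}"
  have C'sub: "C' \<subseteq> mat_space s r" unfolding C'_def by auto
  have disj': "\<forall>c\<in>C'. \<forall>c'\<in>C'. c \<noteq> c' \<longrightarrow> nrt_ball s r c R \<inter> nrt_ball s r c' R = {}"
  proof (intro ballI impI)
    fix c1 c2 assume c1: "c1 \<in> C'" and c2: "c2 \<in> C'" and d: "c1 \<noteq> c2"
    show "nrt_ball s r c1 R \<inter> nrt_ball s r c2 R = {}"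
    proof (rule ccontr)
      assume "nrt_ball s r c1 R \<inter> nrt_ball s r c2 R \<noteq> {}"
      then obtain x where x: "x \<in> mat_space s r" "nrt_dist s r x c1 \<le> R" "nrt_dist s r x c2 \<le> R"
        unfolding nrt_ball_def by auto
      have a1: "\<forall>i<s. \<forall>j. R \<le> j \<and> j < r \<longrightarrow> x i j = c1 i j" using dist_le_agree[OF x(2)] by blast
      have a2: "\<forall>i<s. \<forall>j. R \<le> j \<and> j < r \<longrightarrow> x i j = c2 i j" using dist_le_agree[OF x(3)] by blast
      have t: "trunc R c1 \<noteq> trunc R c2"
      proof
        assume eq: "trunc R c1 = trunc R c2"
        have "c1 = c2"
        proof (intro ext)
          fix i j
          show "c1 i j = c2 i j"
          proof (cases "j < R")
            case True thus ?thesis using fun_cong[OF fun_cong[OF eq, of i], of j] by (simp add: trunc_def)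
          next
            case False
            show ?thesis
            proof (cases "i < s \<and> j < r")
              case True thus ?thesis using a1 a2 False by auto
            next
              case False
              have "c1 \<in> mat_space s r" "c2 \<in> mat_space s r" using c1 c2 unfolding C'_def by auto
              moreover have "s \<le> i \<or> r \<le> j" using False by auto
              ultimately show ?thesis using mat_spaceD[of c1 s r i j] mat_spaceD[of c2 s r i j] by simp
            qed
          qed
        qed
        thus False using d by simp
      qed
      have b1: "trunc R x \<in> nrt_ball s R (trunc R c1) R"
        using tr_ms[OF x(1)] x(2) dtr[of x c1] dist_restrict[OF Rr a1]
        unfolding nrt_ball_def by simp
      have b2: "trunc R x \<in> nrt_ball s R (trunc R c2) R"
        using tr_ms[OF x(1)] x(3) dtr[of x c2] dist_restrict[OF Rr a2]
        unfolding nrt_ball_def by simp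
      have "trunc R c1 \<in> C" "trunc R c2 \<in> C" using c1 c2 unfolding C'_def by auto
      then show False using disj t b1 b2 by blast
    qed
  qed
  have cov': "(\<Union>c\<in>C'. nrt_ball s r c R) = mat_space s r"
  proof
    show "(\<Union>c\<in>C'. nrt_ball s r c R) \<subseteq> mat_space s r" unfolding nrt_ball_def by auto
  next
    show "mat_space s r \<subseteq> (\<Union>c\<in>C'. nrt_ball s r c R)"
    proof
      fix x :: "'a mat" assume x: "x \<in> mat_space s r"
      then have "trunc R x \<in> (\<Union>c\<in>C. nrt_ball s R c R)" using cov tr_ms by auto
      then obtain c where c: "c \<in> C" "nrt_dist s R (trunc R x) c \<le> R" unfolding nrt_ball_def by auto
      have cm: "c \<in> mat_space s R" using c Csub by auto
      define y where "y = (\<lambda>i j. if j < R then c i j else x i j)"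
      have ym: "y \<in> mat_space s r"
      proof (rule mat_spaceI)
        fix i j assume h: "s \<le> i \<or> r \<le> j"
        show "y i j = 0"
        proof (cases "j < R")
          case True then have "s \<le> i" using h Rr by linarith
          then show ?thesis using True mat_spaceD[OF cm, of i j] by (simp add: y_def)
        next
          case False then show ?thesis using h mat_spaceD[OF x, of i j] by (simp add: y_def)
        qed
      qed
      have ty: "trunc R y = c"
      proof (intro ext)
        fix i j show "trunc R y i j = c i j"
          using mat_spaceD[OF cm, of i j] by (simp add: y_def trunc_def)
      qed
      have yC: "y \<in> C'" using ym ty c unfolding C'_def by auto
      have ag: "\<forall>i<s. \<forall>j. R \<le> j \<and> j < r \<longrightarrow> x i j = y i j" unfolding y_def by auto
      have "nrt_dist s r x y \<le> R" using dist_restrict[OF Rr ag] dtr[of x y] ty c by simp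
      then show "x \<in> (\<Union>c\<in>C'. nrt_ball s r c R)" using yC x unfolding nrt_ball_def by auto
    qed
  qed
  have CC': "C \<subseteq> C'" using Csub sub tr_id unfolding C'_def by auto
  have finC': "finite C'" using C'sub finite_mat_space finite_subset by blast
  have "card C \<le> card C'" using CC' finC' by (rule card_mono[rotated])
  then have card': "1 < card C'" using cardC by simp
  obtain m where m: "m \<in> mat_space s R" "m \<notin> C" using ne Csub by blast
  have "m \<notin> C'" using m tr_id unfolding C'_def by auto
  moreover have "m \<in> mat_space s r" using m sub by auto
  ultimately have ne': "C' \<noteq> mat_space s r" by auto
  have "C' \<in> Perf s r R" unfolding Perf_def perfect_code_def
    using C'sub disj' cov' card' ne' by auto
  then show ?thesis by auto
qed

lemma L2:
  fixes C' :: "('a::{finite,field}) mat set"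
  assumes C': "C' \<in> Perf s r R" and Rr: "R < r" and s2: "2 \<le> s" and R1: "1 \<le> R"
  shows "(Perf s R R :: 'a mat set set) \<noteq> {}"
proof -
  have C'sub: "C' \<subseteq> mat_space s r"
    and disj': "\<forall>c\<in>C'. \<forall>c'\<in>C'. c \<noteq> c' \<longrightarrow> nrt_ball s r c R \<inter> nrt_ball s r c' R = {}"
    and cov': "(\<Union>c\<in>C'. nrt_ball s r c R) = mat_space s r"
    using C' unfolding Perf_def perfect_code_def by auto
  have "(\<lambda>i j. 0) \<in> (mat_space s r :: 'a mat set)" unfolding mat_space_def by simp
  then obtain c0 where c0: "c0 \<in> C'" using cov' by auto
  define K where "K = {c \<in> C'. \<forall>i<s. \<forall>j. R \<le> j \<and> j < r \<longrightarrow> c i j = c0 i j}"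
  define C where "C = trunc R ` K"
  define ext where "ext = (\<lambda>(x::'a mat) i j. if j < R then x i j else c0 i j)"
  have c0m: "c0 \<in> mat_space s r" using c0 C'sub by auto
  have ext_ms: "ext x \<in> mat_space s r" if "x \<in> mat_space s R" for x
  proof -
    have x0: "x i j = 0" if "s \<le> i \<or> R \<le> j" for i j
      using \<open>x \<in> mat_space s R\<close> that unfolding mat_space_def by blast
    have c00: "c0 i j = 0" if "s \<le> i \<or> r \<le> j" for i j
      using c0m that unfolding mat_space_def by blast
    show ?thesis unfolding mat_space_def
    proof (intro CollectI allI impI)
      fix i j assume h: "s \<le> i \<or> r \<le> j"
      show "ext x i j = 0"
      proof (cases "j < R")
        case True
        then have "s \<le> i" using h Rr by linarith
        then show ?thesis using True x0 unfolding ext_def by simp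
      next
        case False then show ?thesis using h c00 unfolding ext_def by simp
      qed
    qed
  qed
  have key: "nrt_dist s R x (trunc R c) = nrt_dist s r (ext x) c" if "c \<in> K" for x c
  proof -
    have ag: "\<forall>i<s. \<forall>j. R \<le> j \<and> j < r \<longrightarrow> ext x i j = c i j"
      using that unfolding K_def ext_def by auto
    have "nrt_dist s r (ext x) c = nrt_dist s R (ext x) c" using dist_restrict[OF _ ag] Rr by simp
    also have "\<dots> = nrt_dist s R x (trunc R c)"
      by (intro dist_cong) (auto simp: ext_def trunc_def)
    finally show ?thesis by simp
  qed
  have tr_ms: "trunc R x \<in> mat_space s R" if "x \<in> mat_space s r" for x :: "'a mat"
    using that by (rule trunc_ms)
  have Csub: "C \<subseteq> mat_space s R" unfolding C_def K_def using C'sub tr_ms by auto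
  have disj: "\<forall>a\<in>C. \<forall>b\<in>C. a \<noteq> b \<longrightarrow> nrt_ball s R a R \<inter> nrt_ball s R b R = {}"
  proof (intro ballI impI)
    fix a b assume a: "a \<in> C" and b: "b \<in> C" and d: "a \<noteq> b"
    obtain c1 where c1: "c1 \<in> K" "a = trunc R c1" using a unfolding C_def by auto
    obtain c2 where c2: "c2 \<in> K" "b = trunc R c2" using b unfolding C_def by auto
    have d': "c1 \<noteq> c2" using d c1 c2 by auto
    show "nrt_ball s R a R \<inter> nrt_ball s R b R = {}"
    proof (rule ccontr)
      assume "nrt_ball s R a R \<inter> nrt_ball s R b R \<noteq> {}"
      then obtain x where x: "x \<in> mat_space s R" "nrt_dist s R x a \<le> R" "nrt_dist s R x b \<le> R"
        unfolding nrt_ball_def by auto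
      have "ext x \<in> nrt_ball s r c1 R" using x key[OF c1(1), of x] c1 ext_ms
        unfolding nrt_ball_def by auto
      moreover have "ext x \<in> nrt_ball s r c2 R" using x key[OF c2(1), of x] c2 ext_ms
        unfolding nrt_ball_def by auto
      moreover have "c1 \<in> C'" "c2 \<in> C'" using c1 c2 unfolding K_def by auto
      ultimately show False using disj' d' by blast
    qed
  qed
  have cov: "(\<Union>c\<in>C. nrt_ball s R c R) = mat_space s R"
  proof
    show "(\<Union>c\<in>C. nrt_ball s R c R) \<subseteq> mat_space s R" unfolding nrt_ball_def by auto
  next
    show "mat_space s R \<subseteq> (\<Union>c\<in>C. nrt_ball s R c R)"
    proof
      fix x :: "'a mat" assume x: "x \<in> mat_space s R"
      then have "ext x \<in> (\<Union>c\<in>C'. nrt_ball s r c R)" using cov' ext_ms by auto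
      then obtain c where c: "c \<in> C'" "nrt_dist s r (ext x) c \<le> R" unfolding nrt_ball_def by auto
      have "\<forall>i<s. \<forall>j. R \<le> j \<and> j < r \<longrightarrow> c i j = c0 i j"
        using dist_le_agree[OF c(2)] unfolding ext_def by fastforce
      then have cK: "c \<in> K" using c unfolding K_def by auto
      then have "nrt_dist s R x (trunc R c) \<le> R" using key c by simp
      then show "x \<in> (\<Union>c\<in>C. nrt_ball s R c R)" using x cK unfolding C_def nrt_ball_def by auto
    qed
  qed
  have c0K: "c0 \<in> K" using c0 unfolding K_def by auto
  define c1 where "c1 = trunc R c0"
  have c1C: "c1 \<in> C" unfolding C_def c1_def using c0K by auto
  have c1m: "c1 \<in> mat_space s R" using Csub c1C by auto
  define e :: "'a mat" where "e = (\<lambda>i j. if i = 0 \<and> j = 0 then 1 else 0)"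
  define c2 where "c2 = (\<lambda>i j. c1 i j + e i j)"
  have c2m: "c2 \<in> mat_space s R" using c1m s2 R1 unfolding c2_def e_def mat_space_def by auto
  have "c2 \<notin> C"
  proof
    assume c2C: "c2 \<in> C"
    have "c2 \<noteq> c1"
    proof
      assume "c2 = c1"
      then have "c2 0 0 = c1 0 0" by simp
      then show False unfolding c2_def e_def by simp
    qed
    moreover have "c2 \<in> nrt_ball s R c2 R" using c2m unfolding nrt_ball_def by (simp add: dist_self)
    moreover have "c2 \<in> nrt_ball s R c1 R"
    proof -
      have rw: "row_wt R (e i) \<le> (if i = 0 then 1 else 0)" for i
        unfolding row_wt_le_iff e_def by auto
      have "nrt_dist s R c2 c1 = nrt_wt s R e" unfolding nrt_dist_def c2_def by simp
      also have "\<dots> \<le> (\<Sum>i<s. (if i = 0 then 1 else 0))" unfolding nrt_wt_def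
        by (intro sum_mono rw)
      also have "\<dots> \<le> 1" by simp
      finally show ?thesis using c2m R1 unfolding nrt_ball_def by simp
    qed
    ultimately show False using disj c1C c2C by blast
  qed
  then have ne: "C \<noteq> mat_space s R" using c2m by auto
  define m where "m = (\<lambda>i j. c1 i j + (if i < 2 \<and> j = R - 1 then (1::'a) else 0))"
  have mm: "m \<in> mat_space s R" using c1m s2 R1 unfolding m_def mat_space_def by auto
  then obtain a where a: "a \<in> C" "nrt_dist s R m a \<le> R" using cov unfolding nrt_ball_def by auto
  have "a \<noteq> c1"
  proof
    assume "a = c1"
    define f where "f = (\<lambda>i. row_wt R (\<lambda>j. m i j - c1 i j))"
    have fi: "R \<le> f i" if "i < 2" for i
      using row_wt_ge[of "R - 1" R "\<lambda>j. m i j - c1 i j"] that R1 unfolding f_def m_def by simp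
    have "f 0 + f 1 = sum f {0, 1}" by simp
    also have "\<dots> \<le> sum f {..<s}" using s2 by (intro sum_mono2) auto
    also have "\<dots> = nrt_dist s R m c1" unfolding f_def nrt_dist_def nrt_wt_def by simp
    finally have "2 * R \<le> nrt_dist s R m c1" using fi[of 0] fi[of 1] by simp
    then show False using a \<open>a = c1\<close> R1 by simp
  qed
  have finC: "finite C" using Csub finite_mat_space finite_subset by blast
  have "card {a, c1} \<le> card C" using a c1C finC by (intro card_mono) auto
  then have cardC: "1 < card C" using \<open>a \<noteq> c1\<close> by simp
  have "C \<in> Perf s R R" unfolding Perf_def perfect_code_def using Csub disj cov ne cardC by auto
  then show ?thesis by auto
qed

theorem mainTheorem12:
  fixes s R :: nat
  assumes "2 \<le> s" and "1 \<le> R"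
  shows "((Perf s R R :: ('a::{finite,field}) mat set set) \<noteq> {}
            \<longleftrightarrow> (\<exists>r. R < r \<and> (Perf s r R :: 'a mat set set) \<noteq> {}))
       \<and> ((\<exists>r. R < r \<and> (Perf s r R :: 'a mat set set) \<noteq> {})
            \<longleftrightarrow> (\<forall>r. R < r \<longrightarrow> (Perf s r R :: 'a mat set set) \<noteq> {}))"
proof -
  have A: "(Perf s r R :: 'a mat set set) \<noteq> {}" if "(Perf s R R :: 'a mat set set) \<noteq> {}" "R < r" for r
    using that L1[of _ s R r] by fastforce
  have B: "(Perf s R R :: 'a mat set set) \<noteq> {}" if "(Perf s r R :: 'a mat set set) \<noteq> {}" "R < r" for r
    using that L2[of _ s r R] assms by fastforce
  show ?thesis using A B by (meson lessI)
qed

end
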